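(* Let $(F,H)$ be the unique local solution, on its maximal interval of existence $[0,T_{\max})$, of the matrix Riccati system $$F'=\Gamma\otimes\big(\alpha+(c\otimes I_K)^\top H\big)\big(\alpha+(c\otimes I_K)^\top H\big)^\top-F(I_{N-1}\otimes\Lambda^{-1})F,\quad F(0)=0,$$ $$H'=\big(\Gamma\otimes(\alpha+(c\otimes I_K)^\top H)\big)\xi-F(I_{N-1}\otimes\Lambda^{-1})H,\quad H(0)=0.$$ Then $F(\tau)$ is positive semidefinite for every $\tau\in[0,T_{\max})$.
   Context: $N\ge2$, $K\le D$; $\gamma^1,\dots,\gamma^N>0$ with $\gamma^N=\max_n\gamma^n$; $\bar\gamma=(\sum_n1/\gamma^n)^{-1}$; $c=(c_1,\dots,c_{N-1})^\top$ with $c_n=\bar\gamma(1/\gamma^n-1/\gamma^N)$; $\Gamma:=\mathrm{diag}\{\gamma^1,\dots,\gamma^{N-1}\}-\tfrac1N\mathbb 1_{N-1}\mathbb 1_{N-1}^\top\mathrm{diag}\{\gamma^1-\gamma^N,\dots,\gamma^{N-1}-\gamma^N\}$; $\Lambda\in\mathbb R^{K\times K}$ symmetric positive definite; $\alpha\in\mathbb R^{K\times D}$; $\xi\in\mathbb R^{(N-1)D\times D}$; $F$ is $K(N-1)\times K(N-1)$ and $H$ is $K(N-1)\times D$; $\otimes$ is the Kronecker product. A real square matrix $C$ is positive semidefinite if $b^\top Cb\ge0$ for all $b$ (symmetry not required). *)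

theory Defs
  imports "HOL-Analysis.Analysis" "Jordan_Normal_Form.Matrix"
begin

definition kron :: "real mat \<Rightarrow> real mat \<Rightarrow> real mat" (infixl \<open>\<otimes>\<^sub>K\<close> 70) where
  "kron A B = mat (dim_row A * dim_row B) (dim_col A * dim_col B)
     (\<lambda>(i,j). A $$ (i div dim_row B, j div dim_col B) * B $$ (i mod dim_row B, j mod dim_col B))"

definition mat_inv :: "real mat \<Rightarrow> real mat" where
  "mat_inv A = (SOME B. inverts_mat A B \<and> inverts_mat B A)"

text \<open>Positive semidefinite in the non-symmetric sense of the paper.\<close>
definition psd :: "real mat \<Rightarrow> bool" where
  "psd C \<longleftrightarrow> (\<forall>b \<in> carrier_vec (dim_row C). b \<bullet> (C *\<^sub>v b) \<ge> 0)"

definition sym_pos_def :: "real mat \<Rightarrow> bool" where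
  "sym_pos_def L \<longleftrightarrow> L \<in> carrier_mat (dim_row L) (dim_row L) \<and> transpose_mat L = L \<and>
     (\<forall>v \<in> carrier_vec (dim_row L). v \<noteq> 0\<^sub>v (dim_row L) \<longrightarrow> v \<bullet> (L *\<^sub>v v) > 0)"

definition mat_has_deriv :: "(real \<Rightarrow> real mat) \<Rightarrow> real mat \<Rightarrow> real filter \<Rightarrow> bool" where
  "mat_has_deriv F F' fl \<longleftrightarrow>
     (\<forall>i < dim_row F'. \<forall>j < dim_col F'. ((\<lambda>s. F s $$ (i,j)) has_real_derivative F' $$ (i,j)) fl)"

definition gbar :: "nat \<Rightarrow> (nat \<Rightarrow> real) \<Rightarrow> real" where
  "gbar N \<gamma> = 1 / (\<Sum>n=1..N. 1 / \<gamma> n)"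

text \<open>c as an (N-1) x 1 column matrix; entry i corresponds to c_{i+1}.\<close>
definition cvec :: "nat \<Rightarrow> (nat \<Rightarrow> real) \<Rightarrow> real mat" where
  "cvec N \<gamma> = mat (N - 1) 1 (\<lambda>(i,j). gbar N \<gamma> * (1 / \<gamma> (i+1) - 1 / \<gamma> N))"

definition Gam :: "nat \<Rightarrow> (nat \<Rightarrow> real) \<Rightarrow> real mat" where
  "Gam N \<gamma> = mat (N - 1) (N - 1)
     (\<lambda>(i,j). (if i = j then \<gamma> (i+1) else 0) - (1 / real N) * (\<gamma> (j+1) - \<gamma> N))"

end

theory Submission imports Defs "Jordan_Normal_Form.Determinant" begin

definition qf :: "nat \<Rightarrow> real mat \<Rightarrow> (nat \<Rightarrow> real) \<Rightarrow> real" where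
  "qf n X b = (\<Sum>i<n. \<Sum>j<n. b i * X$$(i,j) * b j)"

lemma sum_split_mult:
  "(\<Sum>i<m*p. f i) = (\<Sum>a<m. \<Sum>c<p. f (a*p+c :: nat) :: real)"
proof (induction m)
  case 0 then show ?case by simp
next
  case (Suc m)
  have "{..<Suc m * p} = {..<m*p} \<union> {m*p..<m*p+p}" by auto
  then have "(\<Sum>i<Suc m*p. f i) = (\<Sum>i<m*p. f i) + (\<Sum>i\<in>{m*p..<m*p+p}. f i)"
    by (simp add: sum.union_disjoint ivl_disj_int)
  also have "(\<Sum>i\<in>{m*p..<m*p+p}. f i) = (\<Sum>c<p. f (m*p+c))"
    using sum.shift_bounds_nat_ivl[of f 0 "m*p" p] by (simp add: lessThan_atLeast0 add.commute)
  finally show ?case using Suc by simp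
qed

lemma idx_bound: "a < m \<Longrightarrow> c < (p::nat) \<Longrightarrow> a*p+c < m*p"
proof -
  assume "a < m" "c < p"
  then have "a*p + c < a*p + p" by simp
  also have "\<dots> = (a+1)*p" by simp
  also have "\<dots> \<le> m*p" using \<open>a<m\<close> by (intro mult_right_mono) auto
  finally show ?thesis .
qed

lemma kron_dims: "dim_row (A \<otimes>\<^sub>K B) = dim_row A * dim_row B" "dim_col (A \<otimes>\<^sub>K B) = dim_col A * dim_col B"
  by (simp_all add: kron_def)

lemma kron_idx: "i < dim_row A * dim_row B \<Longrightarrow> j < dim_col A * dim_col B \<Longrightarrow>
  (A \<otimes>\<^sub>K B) $$ (i,j) = A $$ (i div dim_row B, j div dim_col B) * B $$ (i mod dim_row B, j mod dim_col B)"
  by (simp add: kron_def)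

lemma qf_kron:
  assumes A: "A \<in> carrier_mat m m" and B: "B \<in> carrier_mat p p"
  shows "qf (m*p) (A \<otimes>\<^sub>K B) b = (\<Sum>a<m. \<Sum>c<p. \<Sum>a'<m. \<Sum>c'<p.
          b (a*p+c) * A$$(a,a') * B$$(c,c') * b (a'*p+c'))"
proof -
  have "qf (m*p) (A \<otimes>\<^sub>K B) b = (\<Sum>a<m. \<Sum>c<p. \<Sum>j<m*p. b (a*p+c) * (A \<otimes>\<^sub>K B)$$(a*p+c,j) * b j)"
    unfolding qf_def by (rule sum_split_mult)
  also have "\<dots> = (\<Sum>a<m. \<Sum>c<p. \<Sum>a'<m. \<Sum>c'<p. b (a*p+c) * (A \<otimes>\<^sub>K B)$$(a*p+c,a'*p+c') * b (a'*p+c'))"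
    by (simp add: sum_split_mult)
  also have "\<dots> = (\<Sum>a<m. \<Sum>c<p. \<Sum>a'<m. \<Sum>c'<p.
          b (a*p+c) * A$$(a,a') * B$$(c,c') * b (a'*p+c'))"
  proof (intro sum.cong refl)
    fix a c a' c' assume as: "a \<in> {..<m}" "c \<in> {..<p}" "a' \<in> {..<m}" "c' \<in> {..<p}"
    then have i: "a*p+c < m*p" "a'*p+c' < m*p" 
      by (simp_all add: idx_bound)
    show "b (a*p+c) * (A \<otimes>\<^sub>K B)$$(a*p+c,a'*p+c') * b (a'*p+c') = b (a*p+c) * A$$(a,a') * B$$(c,c') * b (a'*p+c')"
      using i A B as by (simp add: kron_idx)
  qed
  finally show ?thesis .
qed

lemma Gam_idx: "a < N - 1 \<Longrightarrow> a' < N - 1 \<Longrightarrow>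
   Gam N \<gamma> $$ (a,a') = (if a = a' then \<gamma> (a+1) else 0) - (1 / real N) * (\<gamma> (a'+1) - \<gamma> N)"
  by (simp add: Gam_def)

lemma Gam_carrier: "Gam N \<gamma> \<in> carrier_mat (N-1) (N-1)"
  by (simp add: Gam_def)

lemma Gam_psd:
  assumes N: "N \<ge> 2" and gpos: "\<forall>n \<in> {1..N}. \<gamma> n > 0"
    and gmax: "\<forall>n \<in> {1..N}. \<gamma> n \<le> \<gamma> N"
  shows "qf (N-1) (Gam N \<gamma>) y \<ge> 0"
proof -
  define m where "m = N - 1"
  define s where "s = (\<Sum>a<m. y a)"
  define G where "G = \<gamma> N"
  have GN: "G > 0" using gpos N unfolding G_def by auto
  have Npos: "real N > 0" using N by simp
  have inner: "(\<Sum>a'<m. y a * Gam N \<gamma> $$ (a,a') * y a') =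
      \<gamma> (a+1) * (y a)^2 - (1 / real N) * y a * (\<Sum>a'<m. (\<gamma> (a'+1) - G) * y a')" if "a < m" for a
  proof -
    have "(\<Sum>a'<m. y a * Gam N \<gamma> $$ (a,a') * y a') =
       (\<Sum>a'<m. y a * ((if a = a' then \<gamma> (a+1) else 0) - (1 / real N) * (\<gamma> (a'+1) - G)) * y a')"
      using that by (intro sum.cong refl) (simp add: Gam_idx m_def G_def)
    also have "\<dots> = (\<Sum>a'<m. (if a = a' then \<gamma> (a+1) * y a * y a' else 0)) -
         (\<Sum>a'<m. (1 / real N) * y a * ((\<gamma> (a'+1) - G) * y a'))"
      by (subst sum_subtractf[symmetric]) (intro sum.cong refl, simp add: algebra_simps)
    also have "\<dots> = \<gamma> (a+1) * (y a)^2 - (1 / real N) * y a * (\<Sum>a'<m. (\<gamma> (a'+1) - G) * y a')"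
      using that by (simp add: sum.delta sum_distrib_left power2_eq_square)
    finally show ?thesis .
  qed
  have "qf (N-1) (Gam N \<gamma>) y = (\<Sum>a<m. \<gamma> (a+1) * (y a)^2 - (1 / real N) * y a * (\<Sum>a'<m. (\<gamma> (a'+1) - G) * y a'))"
    unfolding qf_def m_def[symmetric] by (intro sum.cong refl) (simp add: inner)
  also have "\<dots> = (\<Sum>a<m. \<gamma> (a+1) * (y a)^2 - (1 / real N) * s * \<gamma> (a+1) * y a) + G * s^2 / real N"
  proof -
    define T where "T = (\<Sum>a'<m. (\<gamma> (a'+1) - G) * y a')"
    define U where "U = (\<Sum>a'<m. \<gamma> (a'+1) * y a')"
    define V where "V = (\<Sum>a<m. \<gamma> (a+1) * (y a)^2)"
    have T: "T = U - G * s"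
      unfolding s_def T_def U_def by (simp add: sum_subtractf sum_distrib_left algebra_simps)
    have h1: "(\<Sum>a<m. \<gamma> (a+1) * (y a)^2 - (1 / real N) * y a * T) = V - (1 / real N) * s * T"
      unfolding V_def s_def by (simp add: sum_subtractf sum_distrib_left sum_distrib_right mult.assoc)
    have h2: "(\<Sum>a<m. \<gamma> (a+1) * (y a)^2 - (1 / real N) * s * \<gamma> (a+1) * y a) = V - (1 / real N) * s * U"
      unfolding V_def U_def by (simp add: sum_subtractf sum_distrib_left sum_distrib_right mult.assoc)
    have key: "V - (1 / real N) * s * T = V - (1 / real N) * s * U + G * s^2 / real N"
      unfolding T using Npos by (simp add: field_simps power2_eq_square)
    show ?thesis unfolding T_def[symmetric] h1 h2 key by simp
  qed
  also have "\<dots> \<ge> (\<Sum>a<m. - (G * s^2 / (4 * real N^2))) + G * s^2 / real N"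
  proof -
    have "\<gamma> (a+1) * (y a)^2 - (1 / real N) * s * \<gamma> (a+1) * y a \<ge> - (G * s^2 / (4 * real N^2))" if "a < m" for a
    proof -
      have ga: "\<gamma> (a+1) > 0" "\<gamma> (a+1) \<le> G" using that gpos gmax unfolding m_def G_def by auto
      have "0 \<le> \<gamma> (a+1) * (y a - s / (2 * real N))^2" using ga by simp
      also have "\<gamma> (a+1) * (y a - s / (2 * real N))^2 =
          \<gamma> (a+1) * (y a)^2 - (1 / real N) * s * \<gamma> (a+1) * y a + \<gamma> (a+1) * (s^2 / (4 * real N^2))"
        using Npos by (simp add: power2_eq_square field_simps)
      finally have "- (\<gamma> (a+1) * (s^2 / (4 * real N^2))) \<le> \<gamma> (a+1) * (y a)^2 - (1 / real N) * s * \<gamma> (a+1) * y a"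
        by linarith
      moreover have "\<gamma> (a+1) * (s^2 / (4 * real N^2)) \<le> G * (s^2 / (4 * real N^2))"
        using ga by (intro mult_right_mono) auto
      ultimately show ?thesis by simp
    qed
    then show ?thesis by (intro add_right_mono sum_mono) auto
  qed
  finally have "qf (N-1) (Gam N \<gamma>) y \<ge> G * s^2 / real N - real m * (G * s^2 / (4 * real N^2))"
    by simp
  moreover have "real m * (G * s^2 / (4 * real N^2)) \<le> G * s^2 / real N"
  proof -
    have "real m \<le> 4 * real N" unfolding m_def by simp
    then have "real m * (G * s^2 / (4 * real N^2)) \<le> (4 * real N) * (G * s^2 / (4 * real N^2))"
      using GN by (intro mult_right_mono) auto
    also have "\<dots> = G * s^2 / real N" using Npos by (simp add: power2_eq_square field_simps)
    finally show ?thesis .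
  qed
  ultimately show ?thesis by linarith
qed

lemma AAT_idx:
  assumes A: "A \<in> carrier_mat p dd" and c: "c < p" and c': "c' < p"
  shows "(A * transpose_mat A) $$ (c,c') = (\<Sum>d<dd. A$$(c,d) * A$$(c',d))"
  using A c c' by (simp add: scalar_prod_def lessThan_atLeast0)

lemma qf_kron_AAT:
  assumes G: "Gm \<in> carrier_mat m m" and Gpsd: "\<forall>y. qf m Gm y \<ge> 0"
    and A: "A \<in> carrier_mat p dd"
  shows "qf (m*p) (Gm \<otimes>\<^sub>K (A * transpose_mat A)) b \<ge> 0"
proof -
  define y where "y d a = (\<Sum>c<p. b (a*p+c) * A$$(c,d))" for d a
  have P: "A * transpose_mat A \<in> carrier_mat p p" using A by simp
  have "qf (m*p) (Gm \<otimes>\<^sub>K (A * transpose_mat A)) b = (\<Sum>a<m. \<Sum>c<p. \<Sum>a'<m. \<Sum>c'<p.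
          b (a*p+c) * Gm$$(a,a') * (\<Sum>d<dd. A$$(c,d) * A$$(c',d)) * b (a'*p+c'))"
    unfolding qf_kron[OF G P] by (intro sum.cong refl) (simp add: AAT_idx[OF A])
  also have "\<dots> = (\<Sum>a<m. \<Sum>c<p. \<Sum>a'<m. \<Sum>c'<p. \<Sum>d<dd.
          (b (a*p+c) * A$$(c,d)) * Gm$$(a,a') * (A$$(c',d) * b (a'*p+c')))"
    by (intro sum.cong refl) (simp add: sum_distrib_left sum_distrib_right mult_ac)
  also have "\<dots> = (\<Sum>d<dd. \<Sum>a<m. \<Sum>a'<m. \<Sum>c<p. \<Sum>c'<p.
          (b (a*p+c) * A$$(c,d)) * Gm$$(a,a') * (A$$(c',d) * b (a'*p+c')))"
    by (simp only: sum.swap[where A="{..<p}" and B="{..<dd}"] sum.swap[where A="{..<m}" and B="{..<dd}"] sum.swap[where A="{..<p}" and B="{..<m}"])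
  also have "\<dots> = (\<Sum>d<dd. qf m Gm (y d))"
    unfolding qf_def y_def by (intro sum.cong refl) (simp add: sum_distrib_left sum_distrib_right mult_ac)
  also have "\<dots> \<ge> 0" using Gpsd by (intro sum_nonneg) auto
  finally show ?thesis .
qed

lemma qf_vec:
  assumes X: "X \<in> carrier_mat n n" and b: "b \<in> carrier_vec n"
  shows "b \<bullet> (X *\<^sub>v b) = qf n X (\<lambda>i. b $ i)"
  using X b unfolding qf_def
  by (simp add: scalar_prod_def lessThan_atLeast0 sum_distrib_left mult_ac)

lemma qf_vec2:
  assumes X: "X \<in> carrier_mat n n"
  shows "qf n X u = vec n u \<bullet> (X *\<^sub>v vec n u)"
proof -
  have "qf n X u = qf n X (\<lambda>i. vec n u $ i)" unfolding qf_def by (intro sum.cong refl) simp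
  then show ?thesis using qf_vec[OF X, of "vec n u"] by simp
qed

lemma inv_props:
  assumes Lam: "\<Lambda> \<in> carrier_mat K K" and pd: "sym_pos_def \<Lambda>"
  shows "mat_inv \<Lambda> \<in> carrier_mat K K"
    and "\<forall>i<K. \<forall>j<K. mat_inv \<Lambda> $$ (i,j) = mat_inv \<Lambda> $$ (j,i)"
    and "qf K (mat_inv \<Lambda>) w \<ge> 0"
proof -
  have dr: "dim_row \<Lambda> = K" using Lam by simp
  have psdL: "qf K \<Lambda> u \<ge> 0" for u
  proof (cases "vec K u = 0\<^sub>v K")
    case True
    then show ?thesis unfolding qf_vec2[OF Lam] using Lam by (simp add: scalar_prod_def)
  next
    case False
    then show ?thesis using pd unfolding qf_vec2[OF Lam] sym_pos_def_def dr
      by (auto intro: less_imp_le)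
  qed
  have "det \<Lambda> \<noteq> 0"
  proof
    assume "det \<Lambda> = 0"
    then obtain v where v: "v \<in> carrier_vec K" "v \<noteq> 0\<^sub>v K" "\<Lambda> *\<^sub>v v = 0\<^sub>v K"
      using det_0_iff_vec_prod_zero[OF Lam] by blast
    then have "v \<bullet> (\<Lambda> *\<^sub>v v) > 0" using pd unfolding sym_pos_def_def dr by auto
    then show False using v by simp
  qed
  from det_non_zero_imp_unit[OF Lam this, of "()"]
  obtain B where B: "B \<in> carrier_mat K K" "B * \<Lambda> = 1\<^sub>m K" "\<Lambda> * B = 1\<^sub>m K"
    unfolding Units_def ring_mat_def by auto
  have ex: "\<exists>B. inverts_mat \<Lambda> B \<and> inverts_mat B \<Lambda>"
    using B Lam unfolding inverts_mat_def by (intro exI[of _ B]) auto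
  define Bi where "Bi = mat_inv \<Lambda>"
  have Bi: "inverts_mat \<Lambda> Bi \<and> inverts_mat Bi \<Lambda>"
    unfolding Bi_def mat_inv_def by (rule someI_ex[OF ex])
  have BiC: "Bi \<in> carrier_mat K K" using Bi Lam unfolding inverts_mat_def
    by (metis carrier_matD(1) carrier_matD(2) carrier_mat_triv index_mult_mat(3) index_one_mat(3))
  then show "mat_inv \<Lambda> \<in> carrier_mat K K" unfolding Bi_def .
  have LB: "\<Lambda> * Bi = 1\<^sub>m K" using Bi Lam unfolding inverts_mat_def by simp
  have LT: "transpose_mat \<Lambda> = \<Lambda>" using pd unfolding sym_pos_def_def by simp
  have "transpose_mat Bi = transpose_mat Bi * (\<Lambda> * Bi)" using LB BiC by simp
  also have "\<dots> = (transpose_mat Bi * \<Lambda>) * Bi" using BiC Lam by (simp add: assoc_mult_mat)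
  also have "transpose_mat Bi * \<Lambda> = transpose_mat (\<Lambda> * Bi)"
    using transpose_mult[OF Lam BiC] LT by simp
  also have "\<dots> = 1\<^sub>m K" using LB by simp
  finally have BT: "transpose_mat Bi = Bi" using BiC by simp
  show "\<forall>i<K. \<forall>j<K. mat_inv \<Lambda> $$ (i,j) = mat_inv \<Lambda> $$ (j,i)"
  proof (intro allI impI)
    fix i j assume "i < K" "j < K"
    then have "transpose_mat Bi $$ (j,i) = Bi $$ (i,j)" using BiC by simp
    then show "mat_inv \<Lambda> $$ (i,j) = mat_inv \<Lambda> $$ (j,i)" using BT unfolding Bi_def by simp
  qed
  define u where "u k = (\<Sum>j<K. Bi$$(k,j) * w j)" for k
  have wu: "(\<Sum>k<K. \<Lambda>$$(i,k) * u k) = w i" if i: "i < K" for i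
  proof -
    have "(\<Sum>k<K. \<Lambda>$$(i,k) * u k) = (\<Sum>k<K. \<Sum>j<K. \<Lambda>$$(i,k) * Bi$$(k,j) * w j)"
      unfolding u_def by (simp add: sum_distrib_left mult_ac)
    also have "\<dots> = (\<Sum>j<K. \<Sum>k<K. \<Lambda>$$(i,k) * Bi$$(k,j) * w j)"
      by (rule sum.swap)
    also have "\<dots> = (\<Sum>j<K. (\<Sum>k<K. \<Lambda>$$(i,k) * Bi$$(k,j)) * w j)"
      by (simp add: sum_distrib_right)
    also have "\<dots> = (\<Sum>j<K. (\<Lambda> * Bi)$$(i,j) * w j)"
      using Lam BiC i by (intro sum.cong refl) (simp add: scalar_prod_def lessThan_atLeast0)
    also have "\<dots> = (\<Sum>j<K. (if i = j then w j else 0))"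
      using LB i by (intro sum.cong refl) simp
    also have "\<dots> = w i" using i by simp
    finally show ?thesis .
  qed
  have "qf K Bi w = (\<Sum>i<K. w i * u i)"
    unfolding qf_def u_def by (simp add: sum_distrib_left mult_ac)
  also have "\<dots> = (\<Sum>i<K. (\<Sum>k<K. \<Lambda>$$(i,k) * u k) * u i)"
    by (intro sum.cong refl) (simp add: wu)
  also have "\<dots> = qf K \<Lambda> u"
    unfolding qf_def by (simp add: sum_distrib_left sum_distrib_right mult_ac)
  finally show "qf K (mat_inv \<Lambda>) w \<ge> 0" using psdL unfolding Bi_def by simp
qed

lemma div_mod_bounds: "k < m * (p::nat) \<Longrightarrow> k div p < m \<and> k mod p < p"
  by (metis less_mult_imp_div_less mod_less_divisor mult_0_right neq0_conv not_less_zero)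

lemma kronI_carrier: "B \<in> carrier_mat p p \<Longrightarrow> 1\<^sub>m m \<otimes>\<^sub>K B \<in> carrier_mat (m*p) (m*p)"
  by (simp add: kron_def)

lemma kronI_sym:
  assumes B: "B \<in> carrier_mat p p" and sym: "\<forall>i<p. \<forall>j<p. B $$ (i,j) = B $$ (j,i)"
    and k: "k < m*p" and l: "l < m*p"
  shows "(1\<^sub>m m \<otimes>\<^sub>K B) $$ (k,l) = (1\<^sub>m m \<otimes>\<^sub>K B) $$ (l,k)"
  using B k l div_mod_bounds[OF k] div_mod_bounds[OF l] sym by (simp add: kron_idx)

lemma kronI_psd:
  assumes B: "B \<in> carrier_mat p p" and psd: "\<forall>w. qf p B w \<ge> 0"
  shows "qf (m*p) (1\<^sub>m m \<otimes>\<^sub>K B) w \<ge> 0"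
proof -
  have "qf (m*p) (1\<^sub>m m \<otimes>\<^sub>K B) w = (\<Sum>a<m. \<Sum>c<p. \<Sum>a'<m. \<Sum>c'<p.
          w (a*p+c) * (1\<^sub>m m)$$(a,a') * B$$(c,c') * w (a'*p+c'))"
    by (rule qf_kron[OF one_carrier_mat B])
  also have "\<dots> = (\<Sum>a<m. \<Sum>c<p. \<Sum>c'<p. w (a*p+c) * B$$(c,c') * w (a*p+c'))"
  proof -
    have inner: "(\<Sum>a'<m. \<Sum>c'<p. w (a*p+c) * (1\<^sub>m m)$$(a,a') * B$$(c,c') * w (a'*p+c')) =
        (\<Sum>c'<p. w (a*p+c) * B$$(c,c') * w (a*p+c'))" if a: "a < m" for a c
    proof -
      have "(\<Sum>a'<m. \<Sum>c'<p. w (a*p+c) * (1\<^sub>m m)$$(a,a') * B$$(c,c') * w (a'*p+c')) =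
         (\<Sum>a'<m. if a = a' then (\<Sum>c'<p. w (a*p+c) * B$$(c,c') * w (a'*p+c')) else 0)"
        using a by (intro sum.cong[OF refl]) auto
      also have "\<dots> = (\<Sum>c'<p. w (a*p+c) * B$$(c,c') * w (a*p+c'))" using a by (simp add: sum.delta)
      finally show ?thesis .
    qed
    show ?thesis
      apply (rule sum.cong[OF refl])
      apply (rule sum.cong[OF refl])
      apply (rule inner)
      by simp
  qed
  also have "\<dots> = (\<Sum>a<m. qf p B (\<lambda>c. w (a*p+c)))"
    unfolding qf_def by simp
  also have "\<dots> \<ge> 0" using psd by (intro sum_nonneg) auto
  finally show ?thesis .
qed

lemma sw2: "(\<Sum>x\<in>A. \<Sum>y\<in>B. \<Sum>z\<in>C. h x y z) = (\<Sum>x\<in>A. \<Sum>z\<in>C. \<Sum>y\<in>B. h x y z)"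
  by (rule sum.cong[OF refl], rule sum.swap)

lemma sw3: "(\<Sum>x\<in>A. \<Sum>y\<in>B. \<Sum>z\<in>C. \<Sum>t\<in>D. h x y z t) = (\<Sum>x\<in>A. \<Sum>y\<in>B. \<Sum>t\<in>D. \<Sum>z\<in>C. h x y z t)"
  by (rule sum.cong[OF refl], rule sw2)

lemma qf_prod:
  assumes F: "F \<in> carrier_mat n n" and M: "M \<in> carrier_mat n n"
  shows "qf n (F * M * F) c = (\<Sum>k<n. \<Sum>l<n. (\<Sum>i<n. c i * F$$(i,k)) * M$$(k,l) * (\<Sum>j<n. F$$(l,j) * c j))"
proof -
  let ?f = "\<lambda>i j l k. c i * F$$(i,k) * M$$(k,l) * F$$(l,j) * c j"
  have "qf n (F * M * F) c = (\<Sum>i<n. \<Sum>j<n. \<Sum>k<n. \<Sum>l<n. ?f i j l k)"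
    unfolding qf_def using F M
    by (intro sum.cong refl) (simp add: scalar_prod_def lessThan_atLeast0 sum_distrib_left sum_distrib_right mult_ac)
  also have "\<dots> = (\<Sum>i<n. \<Sum>j<n. \<Sum>l<n. \<Sum>k<n. ?f i j l k)" by (rule sw3)
  also have "\<dots> = (\<Sum>i<n. \<Sum>l<n. \<Sum>j<n. \<Sum>k<n. ?f i j l k)" by (rule sw2)
  also have "\<dots> = (\<Sum>i<n. \<Sum>l<n. \<Sum>k<n. \<Sum>j<n. ?f i j l k)" by (rule sw3)
  also have "\<dots> = (\<Sum>l<n. \<Sum>i<n. \<Sum>k<n. \<Sum>j<n. ?f i j l k)" by (rule sum.swap)
  also have "\<dots> = (\<Sum>l<n. \<Sum>k<n. \<Sum>i<n. \<Sum>j<n. ?f i j l k)" by (rule sw2)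
  also have "\<dots> = (\<Sum>k<n. \<Sum>l<n. \<Sum>i<n. \<Sum>j<n. ?f i j l k)" by (rule sum.swap)
  also have "\<dots> = (\<Sum>k<n. \<Sum>l<n. (\<Sum>i<n. c i * F$$(i,k)) * M$$(k,l) * (\<Sum>j<n. F$$(l,j) * c j))"
    by (simp add: sum_distrib_left sum_distrib_right mult_ac)
  finally show ?thesis .
qed

lemma bil_le:
  assumes sym: "\<forall>k<n. \<forall>l<n. M $$ (k,l) = M $$ (l,k)" and psd: "\<forall>w. qf n M w \<ge> 0"
  shows "(\<Sum>k<n. \<Sum>l<n. v k * M$$(k,l) * u l) \<le> qf n M (\<lambda>k. (u k + v k) / 2)"
proof -
  have swp: "(\<Sum>k<n. \<Sum>l<n. u k * M$$(k,l) * v l) = (\<Sum>k<n. \<Sum>l<n. v k * M$$(k,l) * u l)"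
  proof -
    have "(\<Sum>k<n. \<Sum>l<n. u k * M$$(k,l) * v l) = (\<Sum>l<n. \<Sum>k<n. u k * M$$(k,l) * v l)"
      by (rule sum.swap)
    also have "\<dots> = (\<Sum>l<n. \<Sum>k<n. v l * M$$(l,k) * u k)"
      using sym by (intro sum.cong refl) (simp add: mult_ac)
    finally show ?thesis .
  qed
  have "qf n M (\<lambda>k. (u k + v k) / 2) - qf n M (\<lambda>k. (u k - v k) / 2) =
     (\<Sum>k<n. \<Sum>l<n. (u k * M$$(k,l) * v l + v k * M$$(k,l) * u l) / 2)"
    unfolding qf_def by (simp add: sum_subtractf[symmetric] algebra_simps add_divide_distrib diff_divide_distrib)
  also have "\<dots> = ((\<Sum>k<n. \<Sum>l<n. u k * M$$(k,l) * v l) + (\<Sum>k<n. \<Sum>l<n. v k * M$$(k,l) * u l)) / 2"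
    by (simp only: add_divide_distrib sum.distrib sum_divide_distrib[symmetric])
  also have "\<dots> = (\<Sum>k<n. \<Sum>l<n. v k * M$$(k,l) * u l)" unfolding swp by simp
  finally show ?thesis using psd[rule_format, of "\<lambda>k. (u k - v k) / 2"] by linarith
qed

definition Sph :: "nat \<Rightarrow> (nat \<Rightarrow> real) set" where
  "Sph n = {c. (\<forall>i. n \<le> i \<longrightarrow> c i = 0) \<and> (\<Sum>i<n. (c i)^2) = 1}"

lemma Sph_bound: "c \<in> Sph n \<Longrightarrow> \<bar>c i\<bar> \<le> 1"
proof -
  assume c: "c \<in> Sph n"
  show ?thesis
  proof (cases "i < n")
    case True
    have "(c i)^2 \<le> (\<Sum>i<n. (c i)^2)" using True by (intro member_le_sum) auto
    then have "(c i)^2 \<le> 1" using c unfolding Sph_def by simp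
    then show ?thesis by (simp add: abs_square_le_1)
  next
    case False then show ?thesis using c unfolding Sph_def by simp
  qed
qed

lemma compact_Sph: "compact (Sph n)"
proof -
  define Bx where "Bx = PiE UNIV (\<lambda>i::nat. if i < n then {-1..1::real} else {0})"
  have "compactin (product_topology (\<lambda>i. euclidean) UNIV) Bx"
    unfolding Bx_def compactin_PiE by auto
  then have cB: "compact Bx" unfolding euclidean_product_topology by simp
  have cont: "continuous_on UNIV (\<lambda>c::nat\<Rightarrow>real. \<Sum>i<n. (c i)^2)"
    by (intro continuous_intros continuous_on_product_then_coordinatewise continuous_on_id)
  have cl: "closed (UNIV \<inter> (\<lambda>c::nat\<Rightarrow>real. \<Sum>i<n. (c i)^2) -` {1})"
    by (rule continuous_closed_preimage[OF cont]) auto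
  have "Sph n = Bx \<inter> (UNIV \<inter> (\<lambda>c::nat\<Rightarrow>real. \<Sum>i<n. (c i)^2) -` {1})"
  proof (intro equalityI subsetI)
    fix c assume c: "c \<in> Sph n"
    have "\<bar>c i\<bar> \<le> 1" for i using Sph_bound[OF c] .
    then show "c \<in> Bx \<inter> (UNIV \<inter> (\<lambda>c::nat\<Rightarrow>real. \<Sum>i<n. (c i)^2) -` {1})"
      using c unfolding Sph_def Bx_def by (auto simp: PiE_iff abs_le_iff)
  next
    fix c assume "c \<in> Bx \<inter> (UNIV \<inter> (\<lambda>c::nat\<Rightarrow>real. \<Sum>i<n. (c i)^2) -` {1})"
    then have c1: "\<forall>i. c i \<in> (if i < n then {-1..1} else {0})" and c2: "(\<Sum>i<n. (c i)^2) = 1"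
      unfolding Bx_def by (auto simp: PiE_iff)
    have "c i = 0" if "n \<le> i" for i using c1[rule_format, of i] that by simp
    then show "c \<in> Sph n" using c2 unfolding Sph_def by auto
  qed
  then show ?thesis using cB cl by auto
qed

lemma qf_scale: "qf n X (\<lambda>i. a * c i) = a^2 * qf n X c"
  unfolding qf_def by (simp add: sum_distrib_left power2_eq_square mult_ac)

lemma qf_cong: "(\<And>i. i < n \<Longrightarrow> c i = d i) \<Longrightarrow> qf n X c = qf n X d"
  unfolding qf_def by (intro sum.cong refl) auto

lemma qf_zero: "(\<And>i. i < n \<Longrightarrow> c i = 0) \<Longrightarrow> qf n X c = 0"
  unfolding qf_def by simp

lemma normalize_Sph:
  assumes r: "(\<Sum>i<n. (c i)^2) \<noteq> 0"
  defines "c' \<equiv> (\<lambda>i. if i < n then c i / sqrt (\<Sum>i<n. (c i)^2) else 0)"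
  shows "c' \<in> Sph n" and "qf n X c = (\<Sum>i<n. (c i)^2) * qf n X c'"
proof -
  define r where "r = (\<Sum>i<n. (c i)^2)"
  have rpos: "r > 0" using r unfolding r_def by (metis less_eq_real_def sum_nonneg zero_le_power2)
  have "(\<Sum>i<n. (c' i)^2) = (\<Sum>i<n. (c i)^2 / r)"
    unfolding c'_def r_def[symmetric] using rpos by (intro sum.cong refl) (simp add: power_divide)
  also have "\<dots> = 1" using rpos by (simp add: sum_divide_distrib[symmetric] r_def)
  finally show "c' \<in> Sph n" unfolding Sph_def c'_def by auto
  have "qf n X c = qf n X (\<lambda>i. sqrt r * c' i)"
    unfolding c'_def r_def[symmetric] using rpos by (intro qf_cong) simp
  also have "\<dots> = r * qf n X c'" using rpos by (simp add: qf_scale)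
  finally show "qf n X c = (\<Sum>i<n. (c i)^2) * qf n X c'" unfolding r_def .
qed

lemma quad_zero:
  fixes L Q :: real
  assumes "\<forall>x. x * L + x^2 * Q \<ge> 0"
  shows "L = 0"
proof (rule ccontr)
  assume L: "L \<noteq> 0"
  define q where "q = \<bar>Q\<bar> + 1"
  have q: "q > 0" "Q \<le> q" unfolding q_def by auto
  define x where "x = - L / (2 * q)"
  have "x * L + x^2 * Q \<le> x * L + x^2 * q" using q by (intro add_left_mono mult_left_mono) auto
  also have "\<dots> = - (L * L) / (4 * q)" unfolding x_def using q by (simp add: field_simps power2_eq_square)
  also have "\<dots> < 0"
  proof -
    have "0 < L*L" using L by (cases "L > 0") (auto simp: mult_pos_pos mult_neg_neg)
    then show ?thesis using q by simp
  qed
  finally show False using assms by (meson not_le)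
qed

lemma sum_ind_right: "k < (n::nat) \<Longrightarrow> (\<Sum>j<n. f j * (if j = k then 1 else 0)) = (f k :: real)"
proof -
  assume k: "k < n"
  have "(\<Sum>j<n. f j * (if j = k then 1 else 0)) = (\<Sum>j<n. if j = k then f j else 0)"
    by (intro sum.cong refl) auto
  then show ?thesis using k by (simp add: sum.delta sum.delta')
qed

lemma sum_ind_left: "k < (n::nat) \<Longrightarrow> (\<Sum>j<n. (if j = k then 1 else 0) * f j) = (f k :: real)"
  using sum_ind_right[of k n f] by (simp add: mult.commute)

lemma qf_expand:
  assumes k: "k < n"
  shows "qf n X (\<lambda>i. c i + x * (if i = k then 1 else 0)) =
    qf n X c + x * ((\<Sum>i<n. c i * X$$(i,k)) + (\<Sum>j<n. X$$(k,j) * c j)) + x^2 * X$$(k,k)"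
proof -
  let ?e = "\<lambda>i::nat. if i = k then 1 else (0::real)"
  have "qf n X (\<lambda>i. c i + x * ?e i) = (\<Sum>i<n. \<Sum>j<n. c i * X$$(i,j) * c j + x * (c i * X$$(i,j) * ?e j)
      + x * (?e i * X$$(i,j) * c j) + x^2 * (?e i * X$$(i,j) * ?e j))"
    unfolding qf_def by (intro sum.cong refl) (simp add: algebra_simps power2_eq_square)
  also have "\<dots> = qf n X c + x * (\<Sum>i<n. \<Sum>j<n. c i * X$$(i,j) * ?e j)
      + x * (\<Sum>i<n. \<Sum>j<n. ?e i * X$$(i,j) * c j) + x^2 * (\<Sum>i<n. \<Sum>j<n. ?e i * X$$(i,j) * ?e j)"
    unfolding qf_def by (simp add: sum.distrib sum_distrib_left)
  also have "(\<Sum>i<n. \<Sum>j<n. c i * X$$(i,j) * ?e j) = (\<Sum>i<n. c i * X$$(i,k))"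
    by (simp only: sum_ind_right[OF k])
  also have "(\<Sum>i<n. \<Sum>j<n. ?e i * X$$(i,j) * c j) = (\<Sum>i<n. ?e i * (\<Sum>j<n. X$$(i,j) * c j))"
    by (intro sum.cong refl) (simp add: sum_distrib_left mult.assoc)
  also have "\<dots> = (\<Sum>j<n. X$$(k,j) * c j)"
    by (simp only: sum_ind_left[OF k])
  also have "(\<Sum>i<n. \<Sum>j<n. ?e i * X$$(i,j) * ?e j) = X$$(k,k)"
    by (simp only: sum_ind_right[OF k] sum_ind_left[OF k])
  finally show ?thesis by (simp add: algebra_simps)
qed

lemma sumsq_expand:
  fixes c :: "nat \<Rightarrow> real" and x :: real
  assumes k: "k < n"
  shows "(\<Sum>i<n. (c i + x * (if i = k then 1 else 0))^2) = (\<Sum>i<n. (c i)^2) + 2 * x * c k + x^2"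
proof -
  have "(\<Sum>i<n. (c i + x * (if i = k then 1 else 0))^2) =
     (\<Sum>i<n. (c i)^2 + (if i = k then 2 * x * c k + x^2 else 0))"
    by (intro sum.cong refl) (auto simp: power2_eq_square algebra_simps)
  also have "\<dots> = (\<Sum>i<n. (c i)^2) + 2 * x * c k + x^2"
    using k by (simp add: sum.distrib)
  finally show ?thesis .
qed

lemma qf_minus:
  assumes "Y \<in> carrier_mat n n"
  shows "qf n (X - Y) c = qf n X c - qf n Y c"
  unfolding qf_def using assms by (simp add: sum_subtractf[symmetric] algebra_simps)

lemma qf_bound:
  assumes c: "c \<in> Sph n"
  shows "qf n M c \<le> (\<Sum>k<n. \<Sum>l<n. \<bar>M$$(k,l)\<bar>)"
  unfolding qf_def
proof (intro sum_mono)
  fix k l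
  have "c k * M$$(k,l) * c l \<le> \<bar>c k * M$$(k,l) * c l\<bar>" by simp
  also have "\<dots> = \<bar>c k\<bar> * \<bar>c l\<bar> * \<bar>M$$(k,l)\<bar>" by (simp add: abs_mult)
  also have "\<dots> \<le> 1 * 1 * \<bar>M$$(k,l)\<bar>" using Sph_bound[OF c]
    by (intro mult_right_mono mult_mono) auto
  finally show "c k * M$$(k,l) * c l \<le> \<bar>M$$(k,l)\<bar>" by simp
qed

lemma riccati_core:
  fixes n :: nat and F F' :: "real \<Rightarrow> real mat" and M :: "real mat" and S0 :: "real set" and \<tau> :: real
  assumes M: "M \<in> carrier_mat n n"
    and Msym: "\<forall>k<n. \<forall>l<n. M$$(k,l) = M$$(l,k)"
    and Mpsd: "\<forall>w. qf n M w \<ge> 0"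
    and dims: "\<forall>t\<in>S0. F t \<in> carrier_mat n n \<and> F' t \<in> carrier_mat n n"
    and derivs: "\<forall>t\<in>S0. mat_has_deriv F (F' t) (at t within S0)"
    and ineq: "\<forall>t\<in>S0. \<forall>c. qf n (F' t) c \<ge> - qf n (F t * M * F t) c"
    and F0: "F 0 = 0\<^sub>m n n"
    and tau: "0 \<le> \<tau>" and S0: "\<forall>t. 0 \<le> t \<and> t \<le> \<tau> \<longrightarrow> t \<in> S0"
  shows "qf n (F \<tau>) b \<ge> 0"
proof (rule ccontr)
  assume neg: "\<not> qf n (F \<tau>) b \<ge> 0"
  define r where "r = (\<Sum>i<n. (b i)^2)"
  have r0: "r \<noteq> 0"
  proof
    assume "r = 0"
    then have "b i = 0" if "i < n" for i
      using that unfolding r_def by (simp add: sum_nonneg_eq_0_iff)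
    then have "qf n (F \<tau>) b = 0" by (rule qf_zero)
    with neg show False by simp
  qed
  have rpos: "r > 0" using r0 unfolding r_def by (metis less_eq_real_def sum_nonneg zero_le_power2)
  obtain c0 where c0: "c0 \<in> Sph n" "qf n (F \<tau>) b = r * qf n (F \<tau>) c0"
    using normalize_Sph[OF r0[unfolded r_def]] unfolding r_def by blast
  define \<kappa> where "\<kappa> = - qf n (F \<tau>) c0"
  have \<kappa>: "\<kappa> > 0"
  proof -
    have "r * qf n (F \<tau>) c0 < 0" using neg c0 by simp
    then show ?thesis unfolding \<kappa>_def using rpos by (simp add: mult_less_0_iff)
  qed
  define \<mu> where "\<mu> = 1 + (\<Sum>k<n. \<Sum>l<n. \<bar>M$$(k,l)\<bar>)"
  have \<mu>: "\<mu> \<ge> 1" unfolding \<mu>_def by (simp add: sum_nonneg)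
  define \<epsilon> where "\<epsilon> = min (\<kappa> / (2 * exp \<tau>)) (1 / (2 * exp \<tau> * \<mu>))"
  have \<epsilon>: "\<epsilon> > 0" unfolding \<epsilon>_def using \<kappa> \<mu> by simp
  have \<epsilon>1: "\<epsilon> * exp \<tau> \<le> \<kappa> / 2"
  proof -
    have "\<epsilon> \<le> \<kappa> / (2 * exp \<tau>)" unfolding \<epsilon>_def by simp
    then have "\<epsilon> * exp \<tau> \<le> \<kappa> / (2 * exp \<tau>) * exp \<tau>" by (intro mult_right_mono) auto
    then show ?thesis by simp
  qed
  have \<epsilon>2: "\<epsilon> * exp \<tau> * \<mu> \<le> 1 / 2"
  proof -
    have "\<epsilon> \<le> 1 / (2 * exp \<tau> * \<mu>)" unfolding \<epsilon>_def by simp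
    then have "\<epsilon> * (exp \<tau> * \<mu>) \<le> 1 / (2 * exp \<tau> * \<mu>) * (exp \<tau> * \<mu>)"
      using \<mu> by (intro mult_right_mono) auto
    then show ?thesis using \<mu> by (simp add: mult.assoc)
  qed
  define hh where "hh c t = qf n (F t) c + \<epsilon> * exp t" for c t
  have contF: "continuous_on {0..\<tau>} (\<lambda>t. F t $$ (i,j))" if ij: "i < n" "j < n" for i j
  proof -
    have "continuous (at t within S0) (\<lambda>t. F t $$ (i,j))" if t: "t \<in> {0..\<tau>}" for t
    proof -
      have tS: "t \<in> S0" using S0 t by auto
      then have "dim_row (F' t) = n" "dim_col (F' t) = n" using dims by auto
      then have "((\<lambda>s. F s $$ (i,j)) has_real_derivative F' t $$ (i,j)) (at t within S0)"
        using derivs tS ij unfolding mat_has_deriv_def by auto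
      then show ?thesis by (rule DERIV_continuous)
    qed
    moreover have "{0..\<tau>} \<subseteq> S0" using S0 by auto
    ultimately show ?thesis
      by (meson continuous_on_eq_continuous_within continuous_within_subset)
  qed
  have cfst: "continuous_on (Sph n \<times> {0..\<tau>}) (\<lambda>p. fst p i)" for i
    by (rule continuous_on_product_then_coordinatewise[OF continuous_on_fst[OF continuous_on_id]])
  have cF: "continuous_on (Sph n \<times> {0..\<tau>}) (\<lambda>p. F (snd p) $$ (i,j))" if "i < n" "j < n" for i j
    by (rule continuous_on_compose2[OF contF[OF that] continuous_on_snd[OF continuous_on_id]]) auto
  have conth: "continuous_on (Sph n \<times> {0..\<tau>}) (\<lambda>p. hh (fst p) (snd p))"
    unfolding hh_def qf_def
    by (intro continuous_on_add continuous_on_sum continuous_on_mult cfst cF continuous_on_const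
        continuous_on_exp continuous_on_snd continuous_on_id) auto
  define Z where "Z = (Sph n \<times> {0..\<tau>}) \<inter> (\<lambda>p. hh (fst p) (snd p)) -` {..0}"
  have cA: "compact (Sph n \<times> {0..\<tau>})" by (intro compact_Times compact_Sph compact_Icc)
  have "closed Z" unfolding Z_def
    by (rule continuous_closed_preimage[OF conth compact_imp_closed[OF cA] closed_atMost])
  then have "compact ((Sph n \<times> {0..\<tau>}) \<inter> Z)" using cA by (rule compact_Int_closed[rotated])
  moreover have "(Sph n \<times> {0..\<tau>}) \<inter> Z = Z" unfolding Z_def by auto
  ultimately have cZ: "compact Z" by simp
  define Bad where "Bad = snd ` Z"
  have cBad: "compact Bad" unfolding Bad_def
    by (rule compact_continuous_image[OF continuous_on_snd[OF continuous_on_id] cZ])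
  have "hh c0 \<tau> \<le> 0" unfolding hh_def using \<epsilon>1 \<kappa> unfolding \<kappa>_def by simp
  then have "(c0, \<tau>) \<in> Z" unfolding Z_def using c0 tau by auto
  then have "\<tau> \<in> Bad" unfolding Bad_def by (metis snd_conv image_eqI)
  then have "Bad \<noteq> {}" by auto
  from compact_attains_inf[OF cBad this] obtain t1 where t1: "t1 \<in> Bad" "\<forall>t\<in>Bad. t1 \<le> t" by blast
  from t1(1) obtain p where p: "p \<in> Z" "t1 = snd p" unfolding Bad_def by blast
  obtain c1 where c1: "c1 \<in> Sph n" "0 \<le> t1" "t1 \<le> \<tau>" "hh c1 t1 \<le> 0"
  proof
    show "fst p \<in> Sph n" "0 \<le> t1" "t1 \<le> \<tau>" "hh (fst p) t1 \<le> 0"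
      using p unfolding Z_def by (auto simp: mem_Times_iff)
  qed
  have notbad: "hh c t > 0" if "c \<in> Sph n" "0 \<le> t" "t < t1" for c t
  proof (rule ccontr)
    assume "\<not> hh c t > 0"
    then have "(c, t) \<in> Z" unfolding Z_def using that c1 by auto
    then have "t \<in> Bad" unfolding Bad_def by (metis snd_conv image_eqI)
    then have "t1 \<le> t" using t1(2) by blast
    then show False using that(3) by linarith
  qed
  have t1pos: "t1 > 0"
  proof (rule ccontr)
    assume "\<not> t1 > 0"
    then have "t1 = 0" using c1 by simp
    moreover have "qf n (F 0) c1 = 0" unfolding F0 qf_def by simp
    ultimately have "hh c1 t1 = \<epsilon>" unfolding hh_def by simp
    then show False using c1 \<epsilon> by simp
  qed
  have t1S: "t1 \<in> S0" using S0 c1 by auto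
  have Ft1: "F t1 \<in> carrier_mat n n" "F' t1 \<in> carrier_mat n n" using dims t1S by auto
  have deriv_g: "((\<lambda>t. hh c t) has_real_derivative (qf n (F' t) c + \<epsilon> * exp t)) (at t within S0)"
    if tS: "t \<in> S0" for c t
  proof -
    have dr: "dim_row (F' t) = n" "dim_col (F' t) = n" using dims tS by auto
    have mh: "mat_has_deriv F (F' t) (at t within S0)" using derivs tS by blast
    have e: "((\<lambda>s. F s $$ (i,j)) has_real_derivative F' t $$ (i,j)) (at t within S0)"
      if "i < n" "j < n" for i j
      using mh that unfolding mat_has_deriv_def dr by blast
    have "((\<lambda>s. \<Sum>i<n. \<Sum>j<n. c i * F s $$ (i,j) * c j) has_real_derivative
        (\<Sum>i<n. \<Sum>j<n. c i * F' t $$ (i,j) * c j)) (at t within S0)"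
    proof -
      have ee: "((\<lambda>s. c i * F s $$ (i,j) * c j) has_real_derivative c i * F' t $$ (i,j) * c j) (at t within S0)"
        if "i < n" "j < n" for i j
        using DERIV_cmult_right[OF DERIV_cmult[OF e[OF that]]] .
      show ?thesis by (intro DERIV_sum ee) auto
    qed
    moreover have "((\<lambda>s. \<epsilon> * exp s) has_real_derivative \<epsilon> * exp t) (at t within S0)"
      by (rule DERIV_cmult[OF has_field_derivative_at_within[OF DERIV_exp]])
    ultimately show ?thesis unfolding hh_def qf_def by (rule DERIV_add)
  qed
  have ge0: "hh c t1 \<ge> 0" if c: "c \<in> Sph n" for c
  proof (rule ccontr)
    assume "\<not> hh c t1 \<ge> 0"
    then have neg1: "- hh c t1 > 0" by simp
    have cont: "continuous (at t1 within S0) (\<lambda>t. hh c t)" by (rule DERIV_continuous[OF deriv_g[OF t1S]])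
    obtain d where d: "d > 0" "\<forall>x'\<in>S0. dist x' t1 < d \<longrightarrow> dist (hh c x') (hh c t1) < - hh c t1"
      using cont[unfolded continuous_within_eps_delta, rule_format, OF neg1] by blast
    define x' where "x' = t1 - min d t1 / 2"
    have x': "0 \<le> x'" "x' < t1" "dist x' t1 < d" unfolding x'_def dist_real_def using d t1pos by auto
    then have "x' \<in> S0" using S0 c1 by auto
    then have "dist (hh c x') (hh c t1) < - hh c t1" using d x' by auto
    then have "hh c x' < 0" unfolding dist_real_def by auto
    then show False using notbad[OF c x'(1,2)] by simp
  qed
  have h1: "hh c1 t1 = 0" using ge0[OF c1(1)] c1 by simp
  define \<delta> where "\<delta> = \<epsilon> * exp t1"
  have \<delta>: "\<delta> > 0" unfolding \<delta>_def using \<epsilon> by simp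
  have \<delta>\<mu>: "\<delta> * \<mu> \<le> 1 / 2"
  proof -
    have "\<delta> * \<mu> \<le> \<epsilon> * exp \<tau> * \<mu>" unfolding \<delta>_def using \<epsilon> \<mu> c1
      by (intro mult_right_mono mult_left_mono) auto
    then show ?thesis using \<epsilon>2 by simp
  qed
  have hom: "qf n (F t1) c + \<delta> * (\<Sum>i<n. (c i)^2) \<ge> 0" for c
  proof (cases "(\<Sum>i<n. (c i)^2) = 0")
    case True
    then have "c i = 0" if "i < n" for i using that by (simp add: sum_nonneg_eq_0_iff)
    then have "qf n (F t1) c = 0" by (rule qf_zero)
    then show ?thesis using True by simp
  next
    case False
    obtain c' where c': "c' \<in> Sph n" "qf n (F t1) c = (\<Sum>i<n. (c i)^2) * qf n (F t1) c'"
      using normalize_Sph[OF False] by blast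
    have "0 \<le> (\<Sum>i<n. (c i)^2) * hh c' t1" using ge0[OF c'(1)] by (simp add: sum_nonneg)
    also have "\<dots> = qf n (F t1) c + \<delta> * (\<Sum>i<n. (c i)^2)"
      unfolding hh_def c'(2) \<delta>_def by (simp add: algebra_simps)
    finally show ?thesis .
  qed
  define u where "u l = (\<Sum>j<n. F t1 $$ (l,j) * c1 j)" for l
  define v where "v k = (\<Sum>i<n. c1 i * F t1 $$ (i,k))" for k
  have qc1: "qf n (F t1) c1 = - \<delta>" using h1 unfolding hh_def \<delta>_def by simp
  have s1: "(\<Sum>i<n. (c1 i)^2) = 1" using c1 unfolding Sph_def by simp
  have uv: "u k + v k = -2 * \<delta> * c1 k" if k: "k < n" for k
  proof -
    have "\<forall>x. x * (v k + u k + 2 * \<delta> * c1 k) + x^2 * (F t1 $$ (k,k) + \<delta>) \<ge> 0"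
    proof
      fix x
      have "0 \<le> qf n (F t1) (\<lambda>i. c1 i + x * (if i = k then 1 else 0)) +
          \<delta> * (\<Sum>i<n. (c1 i + x * (if i = k then 1 else 0))^2)" by (rule hom)
      also have "\<dots> = x * (v k + u k + 2 * \<delta> * c1 k) + x^2 * (F t1 $$ (k,k) + \<delta>)"
        unfolding qf_expand[OF k] sumsq_expand[OF k] qc1 s1 u_def v_def by (simp add: algebra_simps)
      finally show "x * (v k + u k + 2 * \<delta> * c1 k) + x^2 * (F t1 $$ (k,k) + \<delta>) \<ge> 0" .
    qed
    from quad_zero[OF this] show ?thesis by simp
  qed
  have D: "qf n (F' t1) c1 + \<epsilon> * exp t1 > 0"
  proof -
    have "qf n (F t1 * M * F t1) c1 = (\<Sum>k<n. \<Sum>l<n. v k * M$$(k,l) * u l)"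
      unfolding qf_prod[OF Ft1(1) M] u_def v_def ..
    also have "\<dots> \<le> qf n M (\<lambda>k. (u k + v k) / 2)" by (rule bil_le[OF Msym Mpsd])
    also have "\<dots> = qf n M (\<lambda>k. (- \<delta>) * c1 k)" by (rule qf_cong) (simp add: uv)
    also have "\<dots> = \<delta>^2 * qf n M c1" using qf_scale[of n M "- \<delta>" c1] by simp
    also have "\<dots> \<le> \<delta>^2 * \<mu>"
    proof -
      have "qf n M c1 \<le> \<mu>" using qf_bound[OF c1(1), of M] unfolding \<mu>_def by simp
      then show ?thesis by (intro mult_left_mono) auto
    qed
    finally have "qf n (F t1 * M * F t1) c1 \<le> \<delta>^2 * \<mu>" .
    moreover have "qf n (F' t1) c1 \<ge> - qf n (F t1 * M * F t1) c1" using ineq t1S by blast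
    ultimately have "qf n (F' t1) c1 \<ge> - (\<delta>^2 * \<mu>)" by linarith
    moreover have "\<delta>^2 * \<mu> \<le> \<delta> / 2"
    proof -
      have "\<delta>^2 * \<mu> = \<delta> * (\<delta> * \<mu>)" by (simp add: power2_eq_square)
      also have "\<dots> \<le> \<delta> * (1/2)" using \<delta> \<delta>\<mu> by (intro mult_left_mono) auto
      finally show ?thesis by simp
    qed
    ultimately show ?thesis using \<delta> unfolding \<delta>_def by simp
  qed
  from has_real_derivative_pos_inc_left[OF deriv_g[OF t1S] D]
  obtain d where d: "d > 0" "\<forall>h>0. t1 - h \<in> S0 \<longrightarrow> h < d \<longrightarrow> hh c1 (t1 - h) < hh c1 t1" by blast
  define \<eta> where "\<eta> = min d t1 / 2"
  have \<eta>: "\<eta> > 0" "\<eta> < d" "0 \<le> t1 - \<eta>" "t1 - \<eta> < t1" unfolding \<eta>_def using d t1pos by auto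
  then have "t1 - \<eta> \<in> S0" using S0 c1 by auto
  then have "hh c1 (t1 - \<eta>) < 0" using d \<eta> h1 by auto
  then show False using notbad[OF c1(1) \<eta>(3,4)] by simp
qed

theorem corollary7p7:
  fixes N K D :: nat and \<gamma> :: "nat \<Rightarrow> real" and \<Lambda> \<alpha> \<xi> :: "real mat"
    and F H F' H' :: "real \<Rightarrow> real mat" and Tmax :: ereal
  assumes N: "N \<ge> 2" and KD: "K \<le> D"
    and gpos: "\<forall>n \<in> {1..N}. \<gamma> n > 0"
    and gmax: "\<forall>n \<in> {1..N}. \<gamma> n \<le> \<gamma> N"
    and Lam: "\<Lambda> \<in> carrier_mat K K" "sym_pos_def \<Lambda>"
    and alpha: "\<alpha> \<in> carrier_mat K D"
    and xi: "\<xi> \<in> carrier_mat ((N - 1) * D) D"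
    and Tpos: "Tmax > 0"
    and dims: "\<forall>t. 0 \<le> t \<and> ereal t < Tmax \<longrightarrow>
       F t \<in> carrier_mat (K * (N - 1)) (K * (N - 1)) \<and> H t \<in> carrier_mat (K * (N - 1)) D \<and>
       F' t \<in> carrier_mat (K * (N - 1)) (K * (N - 1)) \<and> H' t \<in> carrier_mat (K * (N - 1)) D"
    and derivs: "\<forall>t. 0 \<le> t \<and> ereal t < Tmax \<longrightarrow>
       mat_has_deriv F (F' t) (at t within {s. 0 \<le> s \<and> ereal s < Tmax}) \<and>
       mat_has_deriv H (H' t) (at t within {s. 0 \<le> s \<and> ereal s < Tmax})"
    and eqF: "\<forall>t. 0 \<le> t \<and> ereal t < Tmax \<longrightarrow>
       (let A = \<alpha> + transpose_mat (cvec N \<gamma> \<otimes>\<^sub>K 1\<^sub>m K) * H t in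
        F' t = Gam N \<gamma> \<otimes>\<^sub>K (A * transpose_mat A)
               - F t * (1\<^sub>m (N - 1) \<otimes>\<^sub>K mat_inv \<Lambda>) * F t)"
    and eqH: "\<forall>t. 0 \<le> t \<and> ereal t < Tmax \<longrightarrow>
       (let A = \<alpha> + transpose_mat (cvec N \<gamma> \<otimes>\<^sub>K 1\<^sub>m K) * H t in
        H' t = (Gam N \<gamma> \<otimes>\<^sub>K A) * \<xi>
               - F t * (1\<^sub>m (N - 1) \<otimes>\<^sub>K mat_inv \<Lambda>) * H t)"
    and init: "F 0 = 0\<^sub>m (K * (N - 1)) (K * (N - 1))" "H 0 = 0\<^sub>m (K * (N - 1)) D"
  shows "\<forall>\<tau>. 0 \<le> \<tau> \<and> ereal \<tau> < Tmax \<longrightarrow> psd (F \<tau>)"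
proof (intro allI impI)
  fix \<tau> assume tau: "0 \<le> \<tau> \<and> ereal \<tau> < Tmax"
  define n where "n = K * (N - 1)"
  define S0 where "S0 = {s. 0 \<le> s \<and> ereal s < Tmax}"
  define Bi where "Bi = mat_inv \<Lambda>"
  define M where "M = 1\<^sub>m (N - 1) \<otimes>\<^sub>K Bi"
  have BiC: "Bi \<in> carrier_mat K K" and Bisym: "\<forall>i<K. \<forall>j<K. Bi $$ (i,j) = Bi $$ (j,i)"
    and Bipsd: "\<forall>w. qf K Bi w \<ge> 0"
    using inv_props[OF Lam] unfolding Bi_def by auto
  have nn: "(N - 1) * K = n" unfolding n_def by (simp add: mult.commute)
  have MC: "M \<in> carrier_mat n n" using kronI_carrier[OF BiC, of "N - 1"] nn unfolding M_def by simp
  have Msym: "\<forall>k<n. \<forall>l<n. M$$(k,l) = M$$(l,k)"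
    using kronI_sym[OF BiC Bisym, of _ "N - 1"] nn unfolding M_def by auto
  have Mpsd: "\<forall>w. qf n M w \<ge> 0"
    using kronI_psd[OF BiC Bipsd, of "N - 1"] nn unfolding M_def by auto
  have dims': "\<forall>t\<in>S0. F t \<in> carrier_mat n n \<and> F' t \<in> carrier_mat n n"
    using dims unfolding S0_def n_def by auto
  have derivs': "\<forall>t\<in>S0. mat_has_deriv F (F' t) (at t within S0)"
    using derivs unfolding S0_def by auto
  have ineq: "\<forall>t\<in>S0. \<forall>c. qf n (F' t) c \<ge> - qf n (F t * M * F t) c"
  proof (intro ballI allI)
    fix t c assume tS: "t \<in> S0"
    define A where "A = \<alpha> + transpose_mat (cvec N \<gamma> \<otimes>\<^sub>K 1\<^sub>m K) * H t"
    have Ft: "F t \<in> carrier_mat n n" using dims' tS by auto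
    have eq: "F' t = Gam N \<gamma> \<otimes>\<^sub>K (A * transpose_mat A) - F t * M * F t"
      using eqF tS unfolding S0_def A_def M_def Bi_def Let_def by auto
    have "dim_row A = K" unfolding A_def by (simp add: kron_dims cvec_def)
    then have AC: "A \<in> carrier_mat K (dim_col A)" by auto
    have FMF: "F t * M * F t \<in> carrier_mat n n" using Ft MC by auto
    have "qf ((N - 1) * K) (Gam N \<gamma> \<otimes>\<^sub>K (A * transpose_mat A)) c \<ge> 0"
      by (rule qf_kron_AAT[OF Gam_carrier _ AC]) (use Gam_psd[OF N gpos gmax] in auto)
    then have "qf n (Gam N \<gamma> \<otimes>\<^sub>K (A * transpose_mat A)) c \<ge> 0" using nn by simp
    then show "qf n (F' t) c \<ge> - qf n (F t * M * F t) c"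
      unfolding eq qf_minus[OF FMF] by simp
  qed
  have F0: "F 0 = 0\<^sub>m n n" using init unfolding n_def by simp
  have S0t: "\<forall>t. 0 \<le> t \<and> t \<le> \<tau> \<longrightarrow> t \<in> S0"
  proof (intro allI impI)
    fix t assume "0 \<le> t \<and> t \<le> \<tau>"
    then have "ereal t \<le> ereal \<tau>" "0 \<le> t" by auto
    moreover have "ereal t < Tmax" using \<open>ereal t \<le> ereal \<tau>\<close> tau by (meson order.strict_trans1)
    ultimately show "t \<in> S0" unfolding S0_def by auto
  qed
  have Ftau: "F \<tau> \<in> carrier_mat n n" using dims' S0t tau by auto
  show "psd (F \<tau>)" unfolding psd_def
  proof
    fix b :: "real Matrix.vec" assume b: "b \<in> carrier_vec (dim_row (F \<tau>))"
    then have b': "b \<in> carrier_vec n" using Ftau by auto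
    have "qf n (F \<tau>) (\<lambda>i. vec_index b i) \<ge> 0"
      by (rule riccati_core[OF MC Msym Mpsd dims' derivs' ineq F0 _ S0t]) (use tau in auto)
    then show "b \<bullet> (F \<tau> *\<^sub>v b) \<ge> 0" using qf_vec[OF Ftau b'] by simp
  qed
qed

end
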